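(* Let $L$ be a relational language, let $\mathcal F$ be a set of finite irreducible $L$-structures, and let $\mathbf H$ be a countable $\mathcal F$-free $L$-structure (with vertex set $\omega$) universal for all countable $\mathcal F$-free $L$-structures. Assume that there are $\mathcal F$-free $L$-structures $\mathbf B$ and $\mathbf U$, each consisting of one vertex, and infinitely many pairwise non-isomorphic $\mathcal F$-free two-vertex $L$-structures $\mathbf C_0,\mathbf C_1,\dots$ such that in each $\mathbf C_i$ the first vertex induces a copy of $\mathbf B$ and the second (last) vertex induces a copy of $\mathbf U$. Then there exist an $\mathcal F$-free $L$-structure $\mathbf A$ on three vertices and a colouring $c:\binom{\mathbf H}{\mathbf A}\to\omega$ such that for every tree-like embedding $f:\mathbf H\to\mathbf H$, $c$ attains every value in $\omega$ on the set of embeddings $\mathbf A\to\mathbf H$ whose image lies in $f[\omega]$.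
   Context: Convention: every structure is countable, has vertex set some $n\in\omega$ or $\omega$ ordered naturally, embeddings are monotone (order-preserving) embeddings of $L$-structures, isomorphisms likewise respect the order; $\binom{\mathbf H}{\mathbf A}$ is the set of such embeddings $\mathbf A\to\mathbf H$. $\mathbf A$ is $\mathcal F$-free if no member of $\mathcal F$ embeds into it; universal for a class if every member of the class embeds into it. The Gaifman graph of a structure $\mathbf A$ joins distinct $x,y$ iff some tuple in some relation of $\mathbf A$ contains both; $\mathbf A$ is irreducible if its Gaifman graph is complete. For $X\subseteq\omega$, $\mathrm{tp}_{\mathbf H}(X)$ is the isomorphism type (respecting the order) of the substructure of $\mathbf H$ induced on $X$. An embedding $f:\mathbf H\to\mathbf H$ is tree-like if for every finite $X=\{x_0<\dots<x_m\}\subseteq\omega$, every $0\le i\le m$ and every $x\in\omega$ with $x>x_m$ there is $y>x_m$ such that $\mathrm{tp}_{\mathbf H}(f[X]\cup\{f(y)\})=\mathrm{tp}_{\mathbf H}(X\cup\{x\})$ and $\mathrm{tp}_{\mathbf H}(\{0,\dots,f(x_0)-1,f(y)\})=\mathrm{tp}_{\mathbf H}(\{0,\dots,f(x_0)-1,f(x_i)\})$. *)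

theory Defs
  imports "HOL-Library.FuncSet"
begin

text \<open>A relational language is a type of relation symbols 'r together with an
arity function ar.\<close>

record 'r lstr =
  dom :: "nat set"
  rel :: "'r \<Rightarrow> nat list set"

definition wf_str :: "('r \<Rightarrow> nat) \<Rightarrow> 'r lstr \<Rightarrow> bool" where
  "wf_str ar A \<longleftrightarrow> ((\<exists>n. dom A = {..<n}) \<or> dom A = UNIV) \<and>
     (\<forall>r t. t \<in> rel A r \<longrightarrow> length t = ar r \<and> set t \<subseteq> dom A)"

definition is_emb :: "'r lstr \<Rightarrow> 'r lstr \<Rightarrow> (nat \<Rightarrow> nat) \<Rightarrow> bool" where
  "is_emb A B e \<longleftrightarrow> e ` dom A \<subseteq> dom B \<and> strict_mono_on (dom A) e \<and>
     (\<forall>r t. set t \<subseteq> dom A \<longrightarrow> (t \<in> rel A r \<longleftrightarrow> map e t \<in> rel B r))"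

definition Emb :: "'r lstr \<Rightarrow> 'r lstr \<Rightarrow> (nat \<Rightarrow> nat) set" where
  "Emb A B = {e. is_emb A B e \<and> e \<in> extensional (dom A)}"

definition embeds :: "'r lstr \<Rightarrow> 'r lstr \<Rightarrow> bool" where
  "embeds A B \<longleftrightarrow> (\<exists>e. is_emb A B e)"

definition iso :: "'r lstr \<Rightarrow> 'r lstr \<Rightarrow> bool" where
  "iso A B \<longleftrightarrow> (\<exists>e. is_emb A B e \<and> e ` dom A = dom B)"

definition F_free :: "'r lstr set \<Rightarrow> 'r lstr \<Rightarrow> bool" where
  "F_free F A \<longleftrightarrow> (\<forall>X\<in>F. \<not> embeds X A)"

definition irreducible_str :: "'r lstr \<Rightarrow> bool" where
  "irreducible_str A \<longleftrightarrow> (\<forall>x\<in>dom A. \<forall>y\<in>dom A. x \<noteq> y \<longrightarrow>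
     (\<exists>r t. t \<in> rel A r \<and> x \<in> set t \<and> y \<in> set t))"

definition same_tp :: "'r lstr \<Rightarrow> nat set \<Rightarrow> nat set \<Rightarrow> bool" where
  "same_tp H X Y \<longleftrightarrow> (\<exists>g. bij_betw g X Y \<and> strict_mono_on X g \<and>
     (\<forall>r t. set t \<subseteq> X \<longrightarrow> (t \<in> rel H r \<longleftrightarrow> map g t \<in> rel H r)))"

definition tree_like :: "'r lstr \<Rightarrow> (nat \<Rightarrow> nat) \<Rightarrow> bool" where
  "tree_like H f \<longleftrightarrow> is_emb H H f \<and>
     (\<forall>X. finite X \<and> X \<noteq> {} \<longrightarrow>
       (\<forall>xi\<in>X. \<forall>x. x > Max X \<longrightarrow>
          (\<exists>y. y > Max X \<and>
             same_tp H (f ` X \<union> {f y}) (X \<union> {x}) \<and>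
             same_tp H ({..<f (Min X)} \<union> {f y}) ({..<f (Min X)} \<union> {f xi}))))"

end

theory Submission
  imports Defs
begin

lemma rank_eq:
  fixes g :: "nat \<Rightarrow> nat"
  assumes fin: "finite T" and bij: "bij_betw g S T" and sm: "strict_mono_on S g"
    and s: "s \<in> S" and t: "t \<in> T"
    and c: "card {z\<in>S. z < s} = card {z\<in>T. z < t}"
  shows "g s = t"
proof -
  have img: "g ` {z\<in>S. z < s} = {z\<in>T. z < g s}"
  proof
    show "g ` {z\<in>S. z < s} \<subseteq> {z\<in>T. z < g s}"
      using bij sm s by (auto simp: bij_betw_def dest: strict_mono_onD)
    show "{z\<in>T. z < g s} \<subseteq> g ` {z\<in>S. z < s}"
    proof
      fix z assume z: "z \<in> {z\<in>T. z < g s}"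
      then obtain x where x: "x \<in> S" "z = g x" using bij by (auto simp: bij_betw_def)
      have "x < s" using strict_mono_on_less[OF sm x(1) s] x z by auto
      thus "z \<in> g ` {z\<in>S. z < s}" using x by auto
    qed
  qed
  have inj: "inj_on g {z\<in>S. z < s}" using bij by (auto simp: bij_betw_def intro: inj_on_subset)
  have c2: "card {z\<in>T. z < g s} = card {z\<in>T. z < t}"
    using card_image[OF inj] img c by simp
  have gs: "g s \<in> T" using bij s by (auto simp: bij_betw_def)
  show ?thesis
  proof (rule ccontr)
    assume ne: "g s \<noteq> t"
    show False
    proof (cases "g s < t")
      case True
      have "{z\<in>T. z < g s} \<subset> {z\<in>T. z < t}" using True gs by auto
      hence "card {z\<in>T. z < g s} < card {z\<in>T. z < t}" using fin by (intro psubset_card_mono) auto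
      thus False using c2 by simp
    next
      case False
      hence lt: "t < g s" using ne by simp
      have "{z\<in>T. z < t} \<subset> {z\<in>T. z < g s}" using lt t by auto
      hence "card {z\<in>T. z < t} < card {z\<in>T. z < g s}" using fin by (intro psubset_card_mono) auto
      thus False using c2 by simp
    qed
  qed
qed

lemma tp_equiv:
  assumes "\<forall>r t. set t \<subseteq> S \<longrightarrow> (t \<in> rel H r \<longleftrightarrow> map g t \<in> rel H r)"
    and "p ` set t \<subseteq> S" and "\<forall>z\<in>set t. g (p z) = q z"
  shows "map p t \<in> rel H r \<longleftrightarrow> map q t \<in> rel H r"
proof -
  have "map g (map p t) = map q t" using assms(3) by simp
  thus ?thesis using assms(1,2) by (metis set_map)
qed

lemma emb_rel:
  assumes "is_emb A B e" "set t \<subseteq> dom A"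
  shows "t \<in> rel A r \<longleftrightarrow> map e t \<in> rel B r"
  using assms by (auto simp: is_emb_def)

lemma sm2: "(g::nat\<Rightarrow>nat) 0 < g 1 \<Longrightarrow> strict_mono_on {..<2} g"
  by (auto simp: strict_mono_on_def less_2_cases_iff)

lemma sm3: "(g::nat\<Rightarrow>nat) 0 < g 1 \<Longrightarrow> g 1 < g 2 \<Longrightarrow> strict_mono_on {..<3} g"
proof (rule strict_mono_onI)
  fix r s :: nat assume a: "g 0 < g 1" "g 1 < g 2" "r \<in> {..<3}" "s \<in> {..<3}" "r < s"
  hence "(r = 0 \<and> s = 1) \<or> (r = 0 \<and> s = 2) \<or> (r = 1 \<and> s = 2)" by auto
  thus "g r < g s" using a(1,2) by auto
qed

lemma C_unique:
  assumes e1: "is_emb (C i) H g1" and e2: "is_emb (C k) H g2" and "g1 0 = g2 0" "g1 1 = g2 1"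
    and d1: "dom (C i) = {..<2}" and d2: "dom (C k) = {..<2}"
  shows "iso (C i) (C k)"
proof -
  have rl: "t \<in> rel (C i) r \<longleftrightarrow> map id t \<in> rel (C k) r" if st: "set t \<subseteq> dom (C i)" for r t
  proof -
    have st2: "set t \<subseteq> dom (C k)" using st d1 d2 by simp
    have "\<forall>z\<in>set t. g1 z = g2 z" using st d1 assms(3,4) by (auto simp: less_2_cases_iff)
    hence eq: "map g1 t = map g2 t" by simp
    have "t \<in> rel (C i) r \<longleftrightarrow> map g1 t \<in> rel H r" by (rule emb_rel[OF e1 st])
    also have "\<dots> \<longleftrightarrow> map g2 t \<in> rel H r" by (simp only: eq)
    also have "\<dots> \<longleftrightarrow> t \<in> rel (C k) r" by (rule emb_rel[OF e2 st2, symmetric])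
    finally show ?thesis by simp
  qed
  have "is_emb (C i) (C k) id"
    unfolding is_emb_def using rl d1 d2 strict_mono_on_id[of "dom (C i)"] by simp
  moreover have "id ` dom (C i) = dom (C k)" using d1 d2 by simp
  ultimately show ?thesis unfolding iso_def by blast
qed

definition Astr :: "'r lstr \<Rightarrow> 'r lstr" where
  "Astr U = \<lparr>dom = {..<3}, rel = (\<lambda>r. {t. \<exists>v<3. set t \<subseteq> {v} \<and> map (\<lambda>_. 0) t \<in> rel U r})\<rparr>"

definition sg :: "nat \<Rightarrow> nat" where "sg z = (if 2 \<le> z then 1 else 0)"

definition Dstr :: "'r lstr \<Rightarrow> 'r lstr \<Rightarrow> 'r lstr \<Rightarrow> 'r lstr" where
  "Dstr P Q U = \<lparr>dom = {..<4}, rel = (\<lambda>r. {t. (set t \<subseteq> {0,2} \<and> map sg t \<in> rel P r)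
     \<or> (set t \<subseteq> {0,3} \<and> map sg t \<in> rel Q r) \<or> (set t \<subseteq> {1} \<and> map sg t \<in> rel U r)})\<rparr>"

lemma part_emb:
  assumes "is_emb X D e" "e ` dom X \<subseteq> P" "strict_mono_on P \<sigma>" "\<sigma> ` P \<subseteq> dom Q"
    and "\<forall>r t. set t \<subseteq> P \<longrightarrow> (t \<in> rel D r \<longleftrightarrow> map \<sigma> t \<in> rel Q r)"
  shows "is_emb X Q (\<sigma> \<circ> e)"
  unfolding is_emb_def
proof (intro conjI allI impI)
  show "(\<sigma> \<circ> e) ` dom X \<subseteq> dom Q" using assms(2,4) by auto
  show "strict_mono_on (dom X) (\<sigma> \<circ> e)"
  proof (rule strict_mono_onI)
    fix a b assume ab: "a \<in> dom X" "b \<in> dom X" "a < b"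
    have sme: "strict_mono_on (dom X) e" using assms(1) by (simp add: is_emb_def)
    have "e a < e b" using strict_mono_onD[OF sme ab] .
    moreover have "e a \<in> P" "e b \<in> P" using ab assms(2) by blast+
    ultimately show "(\<sigma> \<circ> e) a < (\<sigma> \<circ> e) b" using strict_mono_onD[OF assms(3)] by simp
  qed
  fix r t assume st: "set t \<subseteq> dom X"
  have "set (map e t) \<subseteq> P" using st assms(2) by auto
  thus "t \<in> rel X r \<longleftrightarrow> map (\<sigma> \<circ> e) t \<in> rel Q r"
    using emb_rel[OF assms(1) st, of r] assms(5) by simp
qed

lemma irr_img:
  assumes "is_emb X D e" "wf_str ar X" "irreducible_str X" "p \<in> dom X" "q \<in> dom X" "p \<noteq> q"
  shows "\<exists>r t. t \<in> rel D r \<and> e p \<in> set t \<and> e q \<in> set t"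
proof -
  obtain r t where t: "t \<in> rel X r" "p \<in> set t" "q \<in> set t"
    using assms(3-6) unfolding irreducible_str_def by blast
  have st: "set t \<subseteq> dom X" using assms(2) t(1) unfolding wf_str_def by blast
  have "map e t \<in> rel D r" using emb_rel[OF assms(1) st, of r] t(1) by simp
  thus ?thesis using t by (intro exI[of _ r] exI[of _ "map e t"]) auto
qed

lemma emb_inj: "is_emb X D e \<Longrightarrow> p \<in> dom X \<Longrightarrow> q \<in> dom X \<Longrightarrow> p \<noteq> q \<Longrightarrow> e p \<noteq> e q"
proof -
  assume a: "is_emb X D e" "p \<in> dom X" "q \<in> dom X" "p \<noteq> q"
  have "strict_mono_on (dom X) e" using a(1) by (simp add: is_emb_def)
  from strict_mono_on_imp_inj_on[OF this] a(2-4) show ?thesis by (simp add: inj_on_eq_iff)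
qed

lemma A_wf: assumes "wf_str ar U" shows "wf_str ar (Astr U)"
proof -
  have "\<forall>r t. t \<in> rel (Astr U) r \<longrightarrow> length t = ar r \<and> set t \<subseteq> dom (Astr U)"
  proof (intro allI impI)
    fix r t assume "t \<in> rel (Astr U) r"
    then obtain v where v: "v<3" "set t \<subseteq> {v}" "map (\<lambda>_. 0) t \<in> rel U r" by (auto simp: Astr_def)
    have "length (map (\<lambda>_. 0::nat) t) = ar r" using assms v(3) unfolding wf_str_def by blast
    thus "length t = ar r \<and> set t \<subseteq> dom (Astr U)" using v by (auto simp: Astr_def)
  qed
  moreover have "dom (Astr U) = {..<3}" by (simp add: Astr_def)
  ultimately show ?thesis unfolding wf_str_def by blast
qed

lemma A_free:
  assumes F: "\<forall>X\<in>F. wf_str ar X \<and> finite (dom X) \<and> irreducible_str X"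
    and U: "dom U = {..<1}" "F_free F U"
  shows "F_free F (Astr U)"
  unfolding F_free_def
proof (intro ballI notI)
  fix X assume X: "X \<in> F" and "embeds X (Astr U)"
  then obtain e where e: "is_emb X (Astr U) e" unfolding embeds_def by blast
  have one: "\<forall>p\<in>dom X. \<forall>q\<in>dom X. e p = e q"
  proof (intro ballI, rule ccontr)
    fix p q assume pq: "p \<in> dom X" "q \<in> dom X" "e p \<noteq> e q"
    hence "p \<noteq> q" by auto
    then obtain r t where "t \<in> rel (Astr U) r" "e p \<in> set t" "e q \<in> set t"
      using irr_img[OF e _ _ pq(1,2)] F X by blast
    thus False using pq(3) by (auto simp: Astr_def)
  qed
  obtain v where v: "v < 3" "e ` dom X \<subseteq> {v}"
  proof (cases "dom X = {}")
    case True thus ?thesis using that[of 0] by auto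
  next
    case False
    then obtain p where p: "p \<in> dom X" by auto
    have "e p \<in> dom (Astr U)" using e p unfolding is_emb_def by blast
    hence "e p < 3" by (simp add: Astr_def)
    moreover have "e ` dom X \<subseteq> {e p}" using one p by blast
    ultimately show ?thesis using that[of "e p"] by blast
  qed
  have "is_emb X U ((\<lambda>_. 0) \<circ> e)"
  proof (rule part_emb[OF e v(2)])
    show "strict_mono_on {v} (\<lambda>_. 0::nat)" by (simp add: strict_mono_on_def)
    show "(\<lambda>_. 0) ` {v} \<subseteq> dom U" using U by simp
    show "\<forall>r t. set t \<subseteq> {v} \<longrightarrow> (t \<in> rel (Astr U) r \<longleftrightarrow> map (\<lambda>_. 0) t \<in> rel U r)"
    proof (intro allI impI)
      fix r t assume "set t \<subseteq> {v}"
      have "t \<in> rel (Astr U) r \<longleftrightarrow> (\<exists>v'<3. set t \<subseteq> {v'} \<and> map (\<lambda>_. 0) t \<in> rel U r)"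
        by (simp add: Astr_def)
      thus "t \<in> rel (Astr U) r \<longleftrightarrow> map (\<lambda>_. 0) t \<in> rel U r"
        using v(1) \<open>set t \<subseteq> {v}\<close> by blast
    qed
  qed
  thus False using U X unfolding F_free_def embeds_def by blast
qed

lemma sg_simps[simp]: "sg 0 = 0" "sg 1 = 0" "sg 2 = 1" "sg 3 = 1" "sg (Suc 1) = 1" "sg (Suc 2) = 1" "sg (Suc 0) = 0"
  by (auto simp: sg_def)

lemma map_sg0: "set t \<subseteq> {0} \<Longrightarrow> map sg t = t"
  by (induction t) auto

lemma disj_nil: assumes "set t \<subseteq> A" "set t \<subseteq> B" "A \<inter> B = {}" shows "t = []"
proof -
  have "set t \<subseteq> A \<inter> B" using assms(1,2) by blast
  thus ?thesis using assms(3) by simp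
qed

locale dctx =
  fixes P Q U B :: "'r lstr"
  assumes PB: "\<And>r t. set t \<subseteq> {0} \<Longrightarrow> t \<in> rel P r \<longleftrightarrow> t \<in> rel B r"
    and QB: "\<And>r t. set t \<subseteq> {0} \<Longrightarrow> t \<in> rel Q r \<longleftrightarrow> t \<in> rel B r"
    and PU: "\<And>r t. set t \<subseteq> {0} \<Longrightarrow> map (\<lambda>_. 1) t \<in> rel P r \<longleftrightarrow> t \<in> rel U r"
    and QU: "\<And>r t. set t \<subseteq> {0} \<Longrightarrow> map (\<lambda>_. 1) t \<in> rel Q r \<longleftrightarrow> t \<in> rel U r"
begin

abbreviation "D \<equiv> Dstr P Q U"

lemma D_rel: "t \<in> rel D r \<longleftrightarrow> (set t \<subseteq> {0,2} \<and> map sg t \<in> rel P r)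
     \<or> (set t \<subseteq> {0,3} \<and> map sg t \<in> rel Q r) \<or> (set t \<subseteq> {1} \<and> map sg t \<in> rel U r)"
  by (simp add: Dstr_def)

lemma nilPU: "[] \<in> rel P r \<longleftrightarrow> [] \<in> rel U r" using PU[of "[]" r] by simp
lemma nilQU: "[] \<in> rel Q r \<longleftrightarrow> [] \<in> rel U r" using QU[of "[]" r] by simp

lemma D_P: assumes "set t \<subseteq> {0,2}" shows "t \<in> rel D r \<longleftrightarrow> map sg t \<in> rel P r"
proof
  assume "map sg t \<in> rel P r" thus "t \<in> rel D r" using assms D_rel by blast
next
  assume "t \<in> rel D r"
  hence "(set t \<subseteq> {0,2} \<and> map sg t \<in> rel P r)
     \<or> (set t \<subseteq> {0,3} \<and> map sg t \<in> rel Q r) \<or> (set t \<subseteq> {1} \<and> map sg t \<in> rel U r)"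
    using D_rel by blast
  moreover
  { assume a: "set t \<subseteq> {0,3}" "map sg t \<in> rel Q r"
    have s0: "set t \<subseteq> {0}" using a(1) assms by auto
    hence "map sg t \<in> rel P r" using a(2) map_sg0[OF s0] PB[OF s0] QB[OF s0] by simp }
  moreover
  { assume a: "set t \<subseteq> {1}" "map sg t \<in> rel U r"
    have "t = []" by (rule disj_nil[OF a(1) assms]) auto
    hence "map sg t \<in> rel P r" using a(2) nilPU by simp }
  ultimately show "map sg t \<in> rel P r" by blast
qed

lemma D_Q: assumes "set t \<subseteq> {0,3}" shows "t \<in> rel D r \<longleftrightarrow> map sg t \<in> rel Q r"
proof
  assume "map sg t \<in> rel Q r" thus "t \<in> rel D r" using assms D_rel by blast
next
  assume "t \<in> rel D r"
  hence "(set t \<subseteq> {0,2} \<and> map sg t \<in> rel P r)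
     \<or> (set t \<subseteq> {0,3} \<and> map sg t \<in> rel Q r) \<or> (set t \<subseteq> {1} \<and> map sg t \<in> rel U r)"
    using D_rel by blast
  moreover
  { assume a: "set t \<subseteq> {0,2}" "map sg t \<in> rel P r"
    have s0: "set t \<subseteq> {0}" using a(1) assms by auto
    hence "map sg t \<in> rel Q r" using a(2) map_sg0[OF s0] PB[OF s0] QB[OF s0] by simp }
  moreover
  { assume a: "set t \<subseteq> {1}" "map sg t \<in> rel U r"
    have "t = []" by (rule disj_nil[OF a(1) assms]) auto
    hence "map sg t \<in> rel Q r" using a(2) nilQU by simp }
  ultimately show "map sg t \<in> rel Q r" by blast
qed

lemma D_U: assumes "set t \<subseteq> {1}" shows "t \<in> rel D r \<longleftrightarrow> map sg t \<in> rel U r"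
proof
  assume "map sg t \<in> rel U r" thus "t \<in> rel D r" using assms D_rel by blast
next
  assume "t \<in> rel D r"
  hence "(set t \<subseteq> {0,2} \<and> map sg t \<in> rel P r)
     \<or> (set t \<subseteq> {0,3} \<and> map sg t \<in> rel Q r) \<or> (set t \<subseteq> {1} \<and> map sg t \<in> rel U r)"
    using D_rel by blast
  moreover
  { assume a: "set t \<subseteq> {0,2}" "map sg t \<in> rel P r"
    have "t = []" by (rule disj_nil[OF a(1) assms]) auto
    hence "map sg t \<in> rel U r" using a(2) nilPU by simp }
  moreover
  { assume a: "set t \<subseteq> {0,3}" "map sg t \<in> rel Q r"
    have "t = []" by (rule disj_nil[OF a(1) assms]) auto
    hence "map sg t \<in> rel U r" using a(2) nilQU by simp }
  ultimately show "map sg t \<in> rel U r" by blast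
qed

end

lemma comb4:
  fixes S :: "nat set"
  assumes "S \<subseteq> {..<4}"
    and "\<forall>i\<in>S. \<forall>j\<in>S. i \<noteq> j \<longrightarrow> ({i,j} \<subseteq> {0,2} \<or> {i,j} \<subseteq> {0,3} \<or> {i,j} \<subseteq> {1})"
  shows "S \<subseteq> {0,2} \<or> S \<subseteq> {0,3} \<or> S \<subseteq> {1}"
proof (rule ccontr)
  assume "\<not> ?thesis"
  then obtain a b c where abc: "a \<in> S" "a \<notin> {0,2}" "b \<in> S" "b \<notin> {0,3}" "c \<in> S" "c \<noteq> 1" by blast
  have "a < 4" using abc assms(1) by auto
  hence "a = 1 \<or> a = 3" using abc by auto
  moreover
  { assume a1: "a = 1"
    hence "a \<noteq> c" using abc by auto
    hence "{a,c} \<subseteq> {0,2} \<or> {a,c} \<subseteq> {0,3} \<or> {a,c} \<subseteq> {1}" using assms(2) abc by blast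
    hence False using a1 abc by auto }
  moreover
  { assume a3: "a = 3"
    hence "a \<noteq> b" using abc by auto
    hence "{a,b} \<subseteq> {0,2} \<or> {a,b} \<subseteq> {0,3} \<or> {a,b} \<subseteq> {1}" using assms(2) abc by blast
    hence False using a3 abc by auto }
  ultimately show False by blast
qed

context dctx begin

lemma D_wf:
  assumes "wf_str ar P" "wf_str ar Q" "wf_str ar U"
  shows "wf_str ar D"
proof -
  have "\<forall>r t. t \<in> rel D r \<longrightarrow> length t = ar r \<and> set t \<subseteq> dom D"
  proof (intro allI impI)
    fix r t assume "t \<in> rel D r"
    hence "(set t \<subseteq> {0,2} \<and> map sg t \<in> rel P r)
     \<or> (set t \<subseteq> {0,3} \<and> map sg t \<in> rel Q r) \<or> (set t \<subseteq> {1} \<and> map sg t \<in> rel U r)"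
      using D_rel by blast
    note disj = this
    moreover have "map sg t \<in> rel P r \<Longrightarrow> length (map sg t) = ar r" using assms(1) unfolding wf_str_def by blast
    moreover have "map sg t \<in> rel Q r \<Longrightarrow> length (map sg t) = ar r" using assms(2) unfolding wf_str_def by blast
    moreover have "map sg t \<in> rel U r \<Longrightarrow> length (map sg t) = ar r" using assms(3) unfolding wf_str_def by blast
    ultimately have l: "length (map sg t) = ar r" by blast
    have "{0,2} \<subseteq> {..<4::nat}" "{0,3} \<subseteq> {..<4::nat}" "{1} \<subseteq> {..<4::nat}" by auto
    hence "set t \<subseteq> {..<4}" using disj by blast
    thus "length t = ar r \<and> set t \<subseteq> dom D" using l by (simp add: Dstr_def)
  qed
  moreover have "dom D = {..<4}" by (simp add: Dstr_def)
  ultimately show ?thesis unfolding wf_str_def by blast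
qed

lemma D_free:
  assumes F: "\<forall>X\<in>F. wf_str ar X \<and> finite (dom X) \<and> irreducible_str X"
    and dP: "dom P = {..<2}" and dQ: "dom Q = {..<2}" and dU: "dom U = {..<1}"
    and fP: "F_free F P" and fQ: "F_free F Q" and fU: "F_free F U"
  shows "F_free F D"
  unfolding F_free_def
proof (intro ballI notI)
  fix X assume X: "X \<in> F" and "embeds X D"
  then obtain e where e: "is_emb X D e" unfolding embeds_def by blast
  have S4: "e ` dom X \<subseteq> {..<4}" using e unfolding is_emb_def by (simp add: Dstr_def)
  have pairs: "\<forall>i\<in>e ` dom X. \<forall>j\<in>e ` dom X. i \<noteq> j \<longrightarrow> ({i,j} \<subseteq> {0,2} \<or> {i,j} \<subseteq> {0,3} \<or> {i,j} \<subseteq> {1})"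
  proof (intro ballI impI)
    fix i j assume ij: "i \<in> e ` dom X" "j \<in> e ` dom X" "i \<noteq> j"
    then obtain p q where pq: "p \<in> dom X" "q \<in> dom X" "i = e p" "j = e q" by blast
    hence "p \<noteq> q" using ij by auto
    moreover have wX: "wf_str ar X" "irreducible_str X" using F X by auto
    ultimately obtain r t where t: "t \<in> rel D r" "e p \<in> set t" "e q \<in> set t"
      using irr_img[OF e wX pq(1,2)] by blast
    from t(1) have "set t \<subseteq> {0,2} \<or> set t \<subseteq> {0,3} \<or> set t \<subseteq> {1}" unfolding D_rel by blast
    moreover have ij_sub: "{i,j} \<subseteq> set t" using t pq by simp
    ultimately show "{i,j} \<subseteq> {0,2} \<or> {i,j} \<subseteq> {0,3} \<or> {i,j} \<subseteq> {1}" by (meson order_trans)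
  qed
  have "e ` dom X \<subseteq> {0,2} \<or> e ` dom X \<subseteq> {0,3} \<or> e ` dom X \<subseteq> {1}"
    by (rule comb4[OF S4 pairs])
  moreover
  { assume "e ` dom X \<subseteq> {0,2}"
    hence "is_emb X P (sg \<circ> e)"
    proof (rule part_emb[OF e])
      show "strict_mono_on {0,2} sg" by (auto simp: strict_mono_on_def)
      show "sg ` {0,2} \<subseteq> dom P" using dP by simp
      show "\<forall>r t. set t \<subseteq> {0,2} \<longrightarrow> (t \<in> rel D r \<longleftrightarrow> map sg t \<in> rel P r)" using D_P by blast
    qed
    hence False using fP X unfolding F_free_def embeds_def by blast }
  moreover
  { assume "e ` dom X \<subseteq> {0,3}"
    hence "is_emb X Q (sg \<circ> e)"
    proof (rule part_emb[OF e])
      show "strict_mono_on {0,3} sg" by (auto simp: strict_mono_on_def)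
      show "sg ` {0,3} \<subseteq> dom Q" using dQ by simp
      show "\<forall>r t. set t \<subseteq> {0,3} \<longrightarrow> (t \<in> rel D r \<longleftrightarrow> map sg t \<in> rel Q r)" using D_Q by blast
    qed
    hence False using fQ X unfolding F_free_def embeds_def by blast }
  moreover
  { assume "e ` dom X \<subseteq> {1}"
    hence "is_emb X U (sg \<circ> e)"
    proof (rule part_emb[OF e])
      show "strict_mono_on {1} sg" by (auto simp: strict_mono_on_def)
      show "sg ` {1} \<subseteq> dom U" using dU by (simp add: sg_def)
      show "\<forall>r t. set t \<subseteq> {1} \<longrightarrow> (t \<in> rel D r \<longleftrightarrow> map sg t \<in> rel U r)" using D_U by blast
    qed
    hence False using fU X unfolding F_free_def embeds_def by blast }
  ultimately show False by blast
qed

lemma A_D: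
  assumes dU: "dom U = {..<1}"
  shows "is_emb (Astr U) D Suc"
  unfolding is_emb_def
proof (intro conjI allI impI)
  show "Suc ` dom (Astr U) \<subseteq> dom D" by (auto simp: Astr_def Dstr_def)
  show "strict_mono_on (dom (Astr U)) Suc" by (auto simp: strict_mono_on_def)
  fix r t assume st: "set t \<subseteq> dom (Astr U)"
  have Arel: "t \<in> rel (Astr U) r \<longleftrightarrow> (\<exists>v<3. set t \<subseteq> {v} \<and> map (\<lambda>_. 0) t \<in> rel U r)"
    by (simp add: Astr_def)
  have z0: "set (map (\<lambda>_. 0::nat) t) \<subseteq> {0}" by auto
  have c1: "map sg (map Suc t) = map (\<lambda>_. 1) (map (\<lambda>_. 0::nat) t)" if "set t \<subseteq> {1}"
    using that by (auto simp: sg_def)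
  have c2: "map sg (map Suc t) = map (\<lambda>_. 1) (map (\<lambda>_. 0::nat) t)" if "set t \<subseteq> {2}"
    using that by (auto simp: sg_def)
  have c0: "map sg (map Suc t) = map (\<lambda>_. 0::nat) t" if "set t \<subseteq> {0}"
    using that by (auto simp: sg_def)
  show "t \<in> rel (Astr U) r \<longleftrightarrow> map Suc t \<in> rel D r"
  proof
    assume "t \<in> rel (Astr U) r"
    then obtain v where v: "v < 3" "set t \<subseteq> {v}" "map (\<lambda>_. 0) t \<in> rel U r" using Arel by blast
    have "v = 0 \<or> v = 1 \<or> v = 2" using v(1) by auto
    moreover
    { assume "v = 0"
      hence s: "set t \<subseteq> {0}" using v by simp
      have a: "set (map Suc t) \<subseteq> {1}" using s by auto
      have "map sg (map Suc t) \<in> rel U r" unfolding c0[OF s] by (rule v(3))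
      hence "map Suc t \<in> rel D r" using D_U[OF a] by blast }
    moreover
    { assume "v = 1"
      hence s: "set t \<subseteq> {1}" using v by simp
      have a: "set (map Suc t) \<subseteq> {0,2}" using s by auto
      have "map (\<lambda>_. 1) (map (\<lambda>_. 0::nat) t) \<in> rel P r" using PU[OF z0] v(3) by blast
      hence "map sg (map Suc t) \<in> rel P r" unfolding c1[OF s] .
      hence "map Suc t \<in> rel D r" using D_P[OF a] by blast }
    moreover
    { assume "v = 2"
      hence s: "set t \<subseteq> {2}" using v by simp
      have a: "set (map Suc t) \<subseteq> {0,3}" using s by auto
      have "map (\<lambda>_. 1) (map (\<lambda>_. 0::nat) t) \<in> rel Q r" using QU[OF z0] v(3) by blast
      hence "map sg (map Suc t) \<in> rel Q r" unfolding c2[OF s] .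
      hence "map Suc t \<in> rel D r" using D_Q[OF a] by blast }
    ultimately show "map Suc t \<in> rel D r" by blast
  next
    assume m: "map Suc t \<in> rel D r"
    hence "set (map Suc t) \<subseteq> {0,2} \<or> set (map Suc t) \<subseteq> {0,3} \<or> set (map Suc t) \<subseteq> {1}"
      unfolding D_rel by blast
    moreover
    { assume a: "set (map Suc t) \<subseteq> {0,2}"
      hence s: "set t \<subseteq> {1}" by auto
      have "map sg (map Suc t) \<in> rel P r" using D_P[OF a] m by blast
      hence "map (\<lambda>_. 1) (map (\<lambda>_. 0::nat) t) \<in> rel P r" unfolding c1[OF s] .
      hence "map (\<lambda>_. 0) t \<in> rel U r" using PU[OF z0] by blast
      hence "t \<in> rel (Astr U) r" using s unfolding Arel by (intro exI[of _ 1]) auto }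
    moreover
    { assume a: "set (map Suc t) \<subseteq> {0,3}"
      hence s: "set t \<subseteq> {2}" by auto
      have "map sg (map Suc t) \<in> rel Q r" using D_Q[OF a] m by blast
      hence "map (\<lambda>_. 1) (map (\<lambda>_. 0::nat) t) \<in> rel Q r" unfolding c2[OF s] .
      hence "map (\<lambda>_. 0) t \<in> rel U r" using QU[OF z0] by blast
      hence "t \<in> rel (Astr U) r" using s unfolding Arel by (intro exI[of _ 2]) auto }
    moreover
    { assume a: "set (map Suc t) \<subseteq> {1}"
      hence s: "set t \<subseteq> {0}" by auto
      have "map sg (map Suc t) \<in> rel U r" using D_U[OF a] m by blast
      hence "map (\<lambda>_. 0) t \<in> rel U r" unfolding c0[OF s] .
      hence "t \<in> rel (Astr U) r" using s unfolding Arel by (intro exI[of _ 0]) auto }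
    ultimately show "t \<in> rel (Astr U) r" by blast
  qed
qed

lemma P_D:
  assumes dP: "dom P = {..<2}"
  shows "is_emb P D (\<lambda>z. if z = 0 then 0 else 2)"
  unfolding is_emb_def
proof (intro conjI allI impI)
  have "(\<lambda>z. if z = 0 then 0 else 2) ` dom P \<subseteq> {0,2::nat}" by auto
  moreover have "{0,2::nat} \<subseteq> dom D" by (simp add: Dstr_def)
  ultimately show "(\<lambda>z. if z = 0 then 0 else 2) ` dom P \<subseteq> dom D" by (rule order_trans)
  show "strict_mono_on (dom P) (\<lambda>z::nat. if z = 0 then 0 else 2::nat)" unfolding dP by (rule sm2) simp
  fix r t assume st: "set t \<subseteq> dom P"
  have s: "set (map (\<lambda>z. if z = 0 then 0 else 2) t) \<subseteq> {0,2}" by auto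
  have e: "map sg (map (\<lambda>z::nat. if z = 0 then 0 else 2::nat) t) = t"
    unfolding map_map
  proof (rule map_idI)
    fix z assume "z \<in> set t"
    hence "z < 2" using st dP by auto
    hence "z = 0 \<or> z = 1" by auto
    thus "(sg \<circ> (\<lambda>z::nat. if z = 0 then 0 else 2::nat)) z = z" by auto
  qed
  show "t \<in> rel P r \<longleftrightarrow> map (\<lambda>z. if z = 0 then 0 else 2) t \<in> rel D r"
    using D_P[OF s, of r] unfolding e by blast
qed

lemma Q_D:
  assumes dQ: "dom Q = {..<2}"
  shows "is_emb Q D (\<lambda>z. if z = 0 then 0 else 3)"
  unfolding is_emb_def
proof (intro conjI allI impI)
  have "(\<lambda>z. if z = 0 then 0 else 3) ` dom Q \<subseteq> {0,3::nat}" by auto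
  moreover have "{0,3::nat} \<subseteq> dom D" by (simp add: Dstr_def)
  ultimately show "(\<lambda>z. if z = 0 then 0 else 3) ` dom Q \<subseteq> dom D" by (rule order_trans)
  show "strict_mono_on (dom Q) (\<lambda>z::nat. if z = 0 then 0 else 3::nat)" unfolding dQ by (rule sm2) simp
  fix r t assume st: "set t \<subseteq> dom Q"
  have s: "set (map (\<lambda>z. if z = 0 then 0 else 3) t) \<subseteq> {0,3}" by auto
  have e: "map sg (map (\<lambda>z::nat. if z = 0 then 0 else 3::nat) t) = t"
    unfolding map_map
  proof (rule map_idI)
    fix z assume "z \<in> set t"
    hence "z < 2" using st dQ by auto
    hence "z = 0 \<or> z = 1" by auto
    thus "(sg \<circ> (\<lambda>z::nat. if z = 0 then 0 else 3::nat)) z = z" by auto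
  qed
  show "t \<in> rel Q r \<longleftrightarrow> map (\<lambda>z. if z = 0 then 0 else 3) t \<in> rel D r"
    using D_Q[OF s, of r] unfolding e by blast
qed

end

lemma chain2:
  fixes h :: "nat \<Rightarrow> nat"
  assumes o: "p0 < p1" "q0 < q1"
    and b: "bij_betw h {p0,p1} {q0,q1}" and sm: "strict_mono_on {p0,p1} h"
  shows "h p0 = q0 \<and> h p1 = q1"
proof
  have e: "{z\<in>{p0,p1}. z < p0} = {}" "{z\<in>{q0,q1}. z < q0} = {}" using o by auto
  have "card {z\<in>{p0,p1}. z < p0} = card {z\<in>{q0,q1}. z < q0}" unfolding e by simp
  from rank_eq[OF _ b sm _ _ this] show "h p0 = q0" by simp
  have e: "{z\<in>{p0,p1}. z < p1} = {p0}" "{z\<in>{q0,q1}. z < q1} = {q0}" using o by auto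
  have "card {z\<in>{p0,p1}. z < p1} = card {z\<in>{q0,q1}. z < q1}" unfolding e by simp
  from rank_eq[OF _ b sm _ _ this] show "h p1 = q1" by simp
qed

lemma chain4:
  fixes h :: "nat \<Rightarrow> nat"
  assumes o: "p0 < p1" "p1 < p2" "p2 < p3" "q0 < q1" "q1 < q2" "q2 < q3"
    and b: "bij_betw h {p0,p1,p2,p3} {q0,q1,q2,q3}" and sm: "strict_mono_on {p0,p1,p2,p3} h"
  shows "h p0 = q0 \<and> h p1 = q1 \<and> h p2 = q2 \<and> h p3 = q3"
proof (intro conjI)
  have e: "{z\<in>{p0,p1,p2,p3}. z < p0} = {}" "{z\<in>{q0,q1,q2,q3}. z < q0} = {}" using o by auto
  have "card {z\<in>{p0,p1,p2,p3}. z < p0} = card {z\<in>{q0,q1,q2,q3}. z < q0}" unfolding e using o by simp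
  from rank_eq[OF _ b sm _ _ this] show "h p0 = q0" by simp
  have e: "{z\<in>{p0,p1,p2,p3}. z < p1} = {p0}" "{z\<in>{q0,q1,q2,q3}. z < q1} = {q0}" using o by auto
  have "card {z\<in>{p0,p1,p2,p3}. z < p1} = card {z\<in>{q0,q1,q2,q3}. z < q1}" unfolding e using o by simp
  from rank_eq[OF _ b sm _ _ this] show "h p1 = q1" by simp
  have e: "{z\<in>{p0,p1,p2,p3}. z < p2} = {p0,p1}" "{z\<in>{q0,q1,q2,q3}. z < q2} = {q0,q1}" using o by auto
  have "card {z\<in>{p0,p1,p2,p3}. z < p2} = card {z\<in>{q0,q1,q2,q3}. z < q2}" unfolding e using o by simp
  from rank_eq[OF _ b sm _ _ this] show "h p2 = q2" by simp
  have e: "{z\<in>{p0,p1,p2,p3}. z < p3} = {p0,p1,p2}" "{z\<in>{q0,q1,q2,q3}. z < q3} = {q0,q1,q2}" using o by auto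
  have "card {z\<in>{p0,p1,p2,p3}. z < p3} = card {z\<in>{q0,q1,q2,q3}. z < q3}" unfolding e using o by simp
  from rank_eq[OF _ b sm _ _ this] show "h p3 = q3" by simp
qed

lemma prefix_tp:
  fixes g :: "nat \<Rightarrow> nat"
  assumes mp: "m \<le> p" and mq: "m \<le> q"
    and b: "bij_betw g ({..<m} \<union> {p}) ({..<m} \<union> {q})" and sm: "strict_mono_on ({..<m} \<union> {p}) g"
  shows "(\<forall>w<m. g w = w) \<and> g p = q"
proof (intro conjI allI impI)
  fix w assume w: "w < m"
  have e: "{z\<in>{..<m} \<union> {p}. z < w} = {..<w}" "{z\<in>{..<m} \<union> {q}. z < w} = {..<w}" using w mp mq by auto
  have "card {z\<in>{..<m} \<union> {p}. z < w} = card {z\<in>{..<m} \<union> {q}. z < w}" unfolding e ..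
  from rank_eq[OF _ b sm _ _ this] show "g w = w" using w by simp
next
  have e: "{z\<in>{..<m} \<union> {p}. z < p} = {..<m}" "{z\<in>{..<m} \<union> {q}. z < q} = {..<m}" using mp mq by auto
  have "card {z\<in>{..<m} \<union> {p}. z < p} = card {z\<in>{..<m} \<union> {q}. z < q}" unfolding e ..
  from rank_eq[OF _ b sm _ _ this] show "g p = q" by simp
qed

lemma emb_comp:
  assumes e1: "is_emb X Y e1" and e2: "is_emb Y Z e2"
  shows "is_emb X Z (e2 \<circ> e1)"
  unfolding is_emb_def
proof (intro conjI allI impI)
  have i1: "e1 ` dom X \<subseteq> dom Y" and i2: "e2 ` dom Y \<subseteq> dom Z"
    using e1 e2 by (simp_all add: is_emb_def)
  show "(e2 \<circ> e1) ` dom X \<subseteq> dom Z" using i1 i2 by (auto simp: image_subset_iff)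
  have s1: "strict_mono_on (dom X) e1" and s2: "strict_mono_on (dom Y) e2"
    using e1 e2 by (simp_all add: is_emb_def)
  show "strict_mono_on (dom X) (e2 \<circ> e1)"
  proof (rule strict_mono_onI)
    fix a b assume ab: "a \<in> dom X" "b \<in> dom X" "a < b"
    have "e1 a < e1 b" using strict_mono_onD[OF s1 ab] .
    moreover have "e1 a \<in> dom Y" "e1 b \<in> dom Y" using ab i1 by blast+
    ultimately show "(e2 \<circ> e1) a < (e2 \<circ> e1) b" using strict_mono_onD[OF s2] by simp
  qed
  fix r t assume st: "set t \<subseteq> dom X"
  have st2: "set (map e1 t) \<subseteq> dom Y" using st i1 by auto
  show "t \<in> rel X r \<longleftrightarrow> map (e2 \<circ> e1) t \<in> rel Z r"
    using emb_rel[OF e1 st, of r] emb_rel[OF e2 st2, of r] by simp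
qed

lemma sub_tp:
  assumes b: "bij_betw g S T" and sm: "strict_mono_on S g"
    and r: "\<forall>r t. set t \<subseteq> S \<longrightarrow> (t \<in> rel H r \<longleftrightarrow> map g t \<in> rel H r)"
    and sub: "S' \<subseteq> S"
  shows "same_tp H S' (g ` S')"
  unfolding same_tp_def
proof (intro exI[of _ g] conjI)
  have "inj_on g S" using b by (simp add: bij_betw_def)
  hence "inj_on g S'" using sub by (rule inj_on_subset)
  thus "bij_betw g S' (g ` S')" by (simp add: bij_betw_def)
  show "strict_mono_on S' g" using sm sub by (rule monotone_on_subset)
  show "\<forall>r t. set t \<subseteq> S' \<longrightarrow> (t \<in> rel H r \<longleftrightarrow> map g t \<in> rel H r)" using r sub by blast
qed

lemma C_dctx:
  assumes B: "dom B = {..<1}" and U: "dom U = {..<1}"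
    and C_B: "\<forall>i. \<exists>e. is_emb B (C i) e \<and> e 0 = 0"
    and C_U: "\<forall>i. \<exists>e. is_emb U (C i) e \<and> e 0 = 1"
  shows "dctx (C i) (C j) U B"
proof -
  have PB: "t \<in> rel (C l) r \<longleftrightarrow> t \<in> rel B r" if s: "set t \<subseteq> {0}" for l r t
  proof -
    obtain e where e: "is_emb B (C l) e" "e 0 = 0" using C_B by blast
    have st: "set t \<subseteq> dom B" using s B by auto
    have m: "map e t = t" using s e(2) by (auto intro: map_idI)
    show ?thesis using emb_rel[OF e(1) st, of r] unfolding m by blast
  qed
  have PU: "map (\<lambda>_. 1) t \<in> rel (C l) r \<longleftrightarrow> t \<in> rel U r" if s: "set t \<subseteq> {0}" for l r t
  proof -
    obtain e where e: "is_emb U (C l) e" "e 0 = 1" using C_U by blast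
    have st: "set t \<subseteq> dom U" using s U by auto
    have m: "map e t = map (\<lambda>_. 1) t" using s e(2) by auto
    show ?thesis using emb_rel[OF e(1) st, of r] unfolding m by blast
  qed
  show ?thesis by unfold_locales (rule PB PU, assumption)+
qed

theorem theorem6p2:
  fixes ar :: "'r \<Rightarrow> nat"
    and F :: "'r lstr set"
    and H B U :: "'r lstr"
    and C :: "nat \<Rightarrow> 'r lstr"
  assumes F: "\<forall>X\<in>F. wf_str ar X \<and> finite (dom X) \<and> irreducible_str X"
    and H: "wf_str ar H" "dom H = UNIV" "F_free F H"
    and univ: "\<forall>A. wf_str ar A \<and> F_free F A \<longrightarrow> embeds A H"
    and B: "wf_str ar B" "dom B = {..<1}" "F_free F B"
    and U: "wf_str ar U" "dom U = {..<1}" "F_free F U"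
    and C: "\<forall>i. wf_str ar (C i) \<and> dom (C i) = {..<2} \<and> F_free F (C i)"
    and C_noniso: "\<forall>i j. i \<noteq> j \<longrightarrow> \<not> iso (C i) (C j)"
    and C_B: "\<forall>i. \<exists>e. is_emb B (C i) e \<and> e 0 = 0"
    and C_U: "\<forall>i. \<exists>e. is_emb U (C i) e \<and> e 0 = 1"
  shows "\<exists>A. wf_str ar A \<and> dom A = {..<3} \<and> F_free F A \<and>
           (\<exists>c :: (nat \<Rightarrow> nat) \<Rightarrow> nat. \<forall>f. tree_like H f \<longrightarrow>
              (\<forall>k. \<exists>e\<in>Emb A H. e ` dom A \<subseteq> range f \<and> c e = k))"
proof -
  define A where "A = Astr U"
  have Awf: "wf_str ar A" unfolding A_def by (rule A_wf[OF U(1)])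
  have Adom: "dom A = {..<3}" by (simp add: A_def Astr_def)
  have Afree: "F_free F A" unfolding A_def by (rule A_free[OF F U(2) U(3)])
  define col :: "(nat \<Rightarrow> nat) \<Rightarrow> nat" where
    "col = (\<lambda>e. SOME i. \<exists>g. is_emb (C i) H g \<and>
        g 0 = (LEAST w. w < e 1 \<and> \<not> same_tp H {w, e 2} {w, e 1}) \<and> g 1 = e 1)"
  have main: "\<exists>e\<in>Emb A H. e ` dom A \<subseteq> range f \<and> col e = k" if tl: "tree_like H f" for f k
  proof -
    have fe: "is_emb H H f" using tl by (simp add: tree_like_def)
    have fsm: "strict_mono_on UNIV f" using fe H(2) by (simp add: is_emb_def)
    have fless: "f u < f v" if "u < v" for u v using strict_mono_onD[OF fsm _ _ that] by simp
    interpret dc: dctx "C k" "C (Suc k)" U B by (rule C_dctx[OF B(2) U(2) C_B C_U])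
    have Ck: "wf_str ar (C k)" "dom (C k) = {..<2}" "F_free F (C k)" using C by auto
    have Ck1: "wf_str ar (C (Suc k))" "dom (C (Suc k)) = {..<2}" "F_free F (C (Suc k))" using C by auto
    define D where "D = Dstr (C k) (C (Suc k)) U"
    have Dwf: "wf_str ar D" unfolding D_def by (rule dc.D_wf[OF Ck(1) Ck1(1) U(1)])
    have Dfree: "F_free F D" unfolding D_def by (rule dc.D_free[OF F Ck(2) Ck1(2) U(2) Ck(3) Ck1(3) U(3)])
    have Ddom: "dom D = {..<4}" by (simp add: D_def Dstr_def)
    obtain d where d: "is_emb D H d" using univ Dwf Dfree unfolding embeds_def by blast
    have dsm: "strict_mono_on {..<4} d" using d Ddom by (simp add: is_emb_def)
    define a where "a = d 0"
    define c where "c = d 1"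
    define b where "b = d 2"
    define x where "x = d 3"
    have ord: "a < c" "c < b" "b < x" unfolding a_def b_def c_def x_def
      using strict_mono_onD[OF dsm] by auto
    have gk: "is_emb (C k) H (d \<circ> (\<lambda>z. if z = 0 then 0 else 2))"
      using emb_comp[OF dc.P_D[OF Ck(2)] d[unfolded D_def]] .
    have gk1: "is_emb (C (Suc k)) H (d \<circ> (\<lambda>z. if z = 0 then 0 else 3))"
      using emb_comp[OF dc.Q_D[OF Ck1(2)] d[unfolded D_def]] .
    have eA: "is_emb A H (d \<circ> Suc)"
      unfolding A_def using emb_comp[OF dc.A_D[OF U(2)] d[unfolded D_def]] .
    define X where "X = {a, c, b}"
    have Xfin: "finite X \<and> X \<noteq> {}" by (simp add: X_def)
    have XMax: "Max X = b" unfolding X_def using ord by (intro Max_eqI) auto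
    have XMin: "Min X = a" unfolding X_def using ord by (intro Min_eqI) auto
    have bX: "b \<in> X" by (simp add: X_def)
    have "\<forall>xi\<in>X. \<forall>x'. x' > Max X \<longrightarrow> (\<exists>y. y > Max X \<and>
             same_tp H (f ` X \<union> {f y}) (X \<union> {x'}) \<and>
             same_tp H ({..<f (Min X)} \<union> {f y}) ({..<f (Min X)} \<union> {f xi}))"
      using tl Xfin unfolding tree_like_def by blast
    hence "\<exists>y. y > Max X \<and> same_tp H (f ` X \<union> {f y}) (X \<union> {x}) \<and>
             same_tp H ({..<f (Min X)} \<union> {f y}) ({..<f (Min X)} \<union> {f b})"
      using bX ord(3) XMax by blast
    then obtain y where y: "y > b" "same_tp H (f ` X \<union> {f y}) (X \<union> {x})"
        "same_tp H ({..<f a} \<union> {f y}) ({..<f a} \<union> {f b})"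
      unfolding XMax XMin by blast
    have ford: "f a < f c" "f c < f b" "f b < f y" using ord y(1) fless by auto
    have S4: "f ` X \<union> {f y} = {f a, f c, f b, f y}" "X \<union> {x} = {a, c, b, x}" by (auto simp: X_def)
    obtain h where h: "bij_betw h {f a, f c, f b, f y} {a, c, b, x}"
        "strict_mono_on {f a, f c, f b, f y} h"
        "\<forall>r t. set t \<subseteq> {f a, f c, f b, f y} \<longrightarrow> (t \<in> rel H r \<longleftrightarrow> map h t \<in> rel H r)"
      using y(2) unfolding S4 same_tp_def by blast
    have hv: "h (f a) = a \<and> h (f c) = c \<and> h (f b) = b \<and> h (f y) = x"
      by (rule chain4[OF ford ord h(1,2)])
    obtain g where g: "bij_betw g ({..<f a} \<union> {f y}) ({..<f a} \<union> {f b})"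
        "strict_mono_on ({..<f a} \<union> {f y}) g"
        "\<forall>r t. set t \<subseteq> {..<f a} \<union> {f y} \<longrightarrow> (t \<in> rel H r \<longleftrightarrow> map g t \<in> rel H r)"
      using y(3) unfolding same_tp_def by blast
    have gv: "(\<forall>w<f a. g w = w) \<and> g (f y) = f b"
      by (rule prefix_tp[OF _ _ g(1,2)]) (use ford in auto)
    define e' :: "nat \<Rightarrow> nat" where "e' = restrict (\<lambda>z. if z = 0 then f c else if z = 1 then f b else f y) {..<3}"
    have e'v: "e' 0 = f c" "e' 1 = f b" "e' 2 = f y" by (simp_all add: e'_def)
    have e'z: "z \<in> {..<3} \<Longrightarrow> z = 0 \<or> z = 1 \<or> z = 2" for z :: nat by auto
    have e'emb: "is_emb A H e'"
      unfolding is_emb_def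
    proof (intro conjI allI impI)
      show "e' ` dom A \<subseteq> dom H" using H(2) by simp
      show "strict_mono_on (dom A) e'" unfolding Adom by (rule sm3) (use ford e'v in simp_all)
      fix r t assume st: "set t \<subseteq> dom A"
      have "t \<in> rel A r \<longleftrightarrow> map (d \<circ> Suc) t \<in> rel H r" by (rule emb_rel[OF eA st])
      moreover have "map e' t \<in> rel H r \<longleftrightarrow> map (d \<circ> Suc) t \<in> rel H r"
      proof (rule tp_equiv[OF h(3)])
        show "e' ` set t \<subseteq> {f a, f c, f b, f y}"
        proof
          fix u assume "u \<in> e' ` set t"
          then obtain z where z: "z \<in> set t" "u = e' z" by blast
          have "z = 0 \<or> z = 1 \<or> z = 2" using e'z z(1) st Adom by blast
          thus "u \<in> {f a, f c, f b, f y}" using z(2) e'v by auto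
        qed
        show "\<forall>z\<in>set t. h (e' z) = (d \<circ> Suc) z"
        proof
          fix z assume "z \<in> set t"
          hence "z = 0 \<or> z = 1 \<or> z = 2" using e'z st Adom by blast
          thus "h (e' z) = (d \<circ> Suc) z" using e'v hv by (auto simp: a_def b_def c_def x_def numeral_2_eq_2 numeral_3_eq_3)
        qed
      qed
      ultimately show "t \<in> rel A r \<longleftrightarrow> map e' t \<in> rel H r" by blast
    qed
    have e'ext: "e' \<in> extensional (dom A)" unfolding Adom e'_def by (rule restrict_extensional)
    have e'range: "e' ` dom A \<subseteq> range f"
    proof
      fix u assume "u \<in> e' ` dom A"
      then obtain z where z: "z \<in> dom A" "u = e' z" by blast
      have "z = 0 \<or> z = 1 \<or> z = 2" using e'z z(1) Adom by blast
      thus "u \<in> range f" using z(2) e'v by auto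
    qed
    have gk': "is_emb (C k) H (f \<circ> (d \<circ> (\<lambda>z. if z = 0 then 0 else 2)))" by (rule emb_comp[OF gk fe])
    have nsame: "\<not> same_tp H {f a, f y} {f a, f b}"
    proof
      assume "same_tp H {f a, f y} {f a, f b}"
      then obtain \<phi> where \<phi>: "bij_betw \<phi> {f a, f y} {f a, f b}" "strict_mono_on {f a, f y} \<phi>"
          "\<forall>r t. set t \<subseteq> {f a, f y} \<longrightarrow> (t \<in> rel H r \<longleftrightarrow> map \<phi> t \<in> rel H r)"
        unfolding same_tp_def by blast
      have \<phi>v: "\<phi> (f a) = f a \<and> \<phi> (f y) = f b"
        by (rule chain2[OF _ _ \<phi>(1,2)]) (use ford in auto)
      define g1 where "g1 = (\<lambda>z::nat. if z = 0 then f a else f b)"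
      define pp where "pp = (\<lambda>z::nat. if z = 0 then f a else f y)"
      have g1emb: "is_emb (C (Suc k)) H g1"
        unfolding is_emb_def
      proof (intro conjI allI impI)
        show "g1 ` dom (C (Suc k)) \<subseteq> dom H" using H(2) by simp
        show "strict_mono_on (dom (C (Suc k))) g1" unfolding Ck1(2) by (rule sm2) (use ford in \<open>simp add: g1_def\<close>)
        fix r t assume st: "set t \<subseteq> dom (C (Suc k))"
        have 1: "t \<in> rel (C (Suc k)) r \<longleftrightarrow> map (d \<circ> (\<lambda>z. if z = 0 then 0 else 3)) t \<in> rel H r"
          by (rule emb_rel[OF gk1 st])
        have 2: "map pp t \<in> rel H r \<longleftrightarrow> map (d \<circ> (\<lambda>z. if z = 0 then 0 else 3)) t \<in> rel H r"
          by (rule tp_equiv[OF h(3)]) (use hv in \<open>auto simp: pp_def a_def x_def\<close>)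
        have 3: "map pp t \<in> rel H r \<longleftrightarrow> map g1 t \<in> rel H r"
          by (rule tp_equiv[OF \<phi>(3)]) (use \<phi>v in \<open>auto simp: pp_def g1_def\<close>)
        show "t \<in> rel (C (Suc k)) r \<longleftrightarrow> map g1 t \<in> rel H r" using 1 2 3 by blast
      qed
      have "iso (C (Suc k)) (C k)"
        by (rule C_unique[where C=C and i="Suc k" and k=k, OF g1emb gk' _ _ Ck1(2) Ck(2)]) (simp_all add: g1_def a_def b_def)
      thus False using C_noniso by auto
    qed
    have L: "(LEAST w. w < f b \<and> \<not> same_tp H {w, f y} {w, f b}) = f a"
    proof (rule Least_equality)
      show "f a < f b \<and> \<not> same_tp H {f a, f y} {f a, f b}" using ford nsame by simp
      fix w assume w: "w < f b \<and> \<not> same_tp H {w, f y} {w, f b}"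
      show "f a \<le> w"
      proof (rule ccontr)
        assume "\<not> f a \<le> w"
        hence wa: "w < f a" by simp
        have "same_tp H {w, f y} (g ` {w, f y})"
          by (rule sub_tp[OF g(1,2,3)]) (use wa in auto)
        moreover have "g ` {w, f y} = {w, f b}" using gv wa by simp
        ultimately show False using w by simp
      qed
    qed
    have ex: "\<exists>g. is_emb (C k) H g \<and> g 0 = f a \<and> g 1 = f b"
      using gk' by (intro exI[of _ "f \<circ> (d \<circ> (\<lambda>z. if z = 0 then 0 else 2))"]) (simp add: a_def b_def)
    have colv: "col e' = (SOME i. \<exists>g. is_emb (C i) H g \<and> g 0 = f a \<and> g 1 = f b)"
      unfolding col_def e'v L ..
    have "\<exists>g. is_emb (C (col e')) H g \<and> g 0 = f a \<and> g 1 = f b"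
      unfolding colv by (rule someI_ex[where P="\<lambda>i. \<exists>g. is_emb (C i) H g \<and> g 0 = f a \<and> g 1 = f b"]) (use ex in blast)
    then obtain g2 where g2: "is_emb (C (col e')) H g2" "g2 0 = f a" "g2 1 = f b" by blast
    obtain g3 where g3: "is_emb (C k) H g3" "g3 0 = f a" "g3 1 = f b" using ex by blast
    have "iso (C (col e')) (C k)"
      by (rule C_unique[where C=C and i="col e'" and k=k, OF g2(1) g3(1)]) (use g2 g3 C in auto)
    hence "col e' = k" using C_noniso by blast
    thus ?thesis using e'emb e'ext e'range unfolding Emb_def by blast
  qed
  show ?thesis using Awf Adom Afree main by blast
qed

end
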